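(* Let $G=(V,E)$ be a connected, locally finite, undirected graph, let $s:V\to\mathbb{R}$, and let $\ell$ be a legal toppling procedure for $s$. Then: (i) for every $f\in\mathcal{F}_s$ we have $\ell_\infty\le f$ pointwise; (ii) if $u$ is any stabilizing toppling procedure for $s$, then $\ell_\infty\le u_\infty$; (iii) if $u$ is any legal stabilizing toppling procedure for $s$, then for all $x\in V$, $u_\infty(x)=\inf\{f(x): f\in\mathcal{F}_s\}$. In particular $u_\infty$ and the final configuration $s+\Delta u_\infty$ do not depend on the choice of legal stabilizing toppling procedure $u$.
   Context: $\Delta u(x)=\sum_{y\sim x}(u(y)-u(x))$ and $\mathcal{F}_s=\{f:V\to\mathbb{R}: f\ge 0,\ s+\Delta f\le 1\}$. A toppling procedure is given by a well-ordered closed set $T\subset[0,\infty)$ with $0\in T$ and a function $(t,x)\mapsto u_t(x)\in[0,\infty)$ on $T\times V$ such that for all $x$: $u_0(x)=0$; $u_{t_1}(x)\le u_{t_2}(x)$ for $t_1\le t_2$; and $t_n\uparrow t$ implies $u_{t_n}(x)\uparrow u_t(x)$. Set $s_t=s+\Delta u_t$ and $t^-=\sup\{r\in T: r<t\}$. The procedure is legal for $s$ if $u_t(x)-u_{t^-}(x)\le (s_{t^-}(x)-1)^+/\deg(x)$ for all $x\in V$ and $t\in T\setminus\{0\}$. It is finite if $u_\infty(x):=\lim_{t\to\sup T}u_t(x)<\infty$ for all $x$, and stabilizing for $s$ if it is finite and $s+\Delta u_\infty\le 1$. *)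

theory Defs
  imports "HOL-Analysis.Analysis"
begin

text \<open>Graph: vertex set = UNIV of type 'a, adjacency E (symmetric, no loops).\<close>

definition nbrs :: "('a \<Rightarrow> 'a \<Rightarrow> bool) \<Rightarrow> 'a \<Rightarrow> 'a set" where
  "nbrs E x = {y. E x y}"

definition deg :: "('a \<Rightarrow> 'a \<Rightarrow> bool) \<Rightarrow> 'a \<Rightarrow> nat" where
  "deg E x = card (nbrs E x)"

definition lap :: "('a \<Rightarrow> 'a \<Rightarrow> bool) \<Rightarrow> ('a \<Rightarrow> real) \<Rightarrow> 'a \<Rightarrow> real" where
  "lap E u x = (\<Sum>y\<in>nbrs E x. u y - u x)"

definition conn_lf_graph :: "('a \<Rightarrow> 'a \<Rightarrow> bool) \<Rightarrow> bool" where
  "conn_lf_graph E \<longleftrightarrow>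
     (\<forall>x y. E x y \<longrightarrow> E y x) \<and> (\<forall>x. \<not> E x x) \<and>
     (\<forall>x. finite (nbrs E x)) \<and> (\<forall>x y. E\<^sup>*\<^sup>* x y)"

definition Fs :: "('a \<Rightarrow> 'a \<Rightarrow> bool) \<Rightarrow> ('a \<Rightarrow> real) \<Rightarrow> ('a \<Rightarrow> real) set" where
  "Fs E s = {f. (\<forall>x. 0 \<le> f x) \<and> (\<forall>x. s x + lap E f x \<le> 1)}"

definition well_ordered_set :: "real set \<Rightarrow> bool" where
  "well_ordered_set T \<longleftrightarrow> (\<forall>S. S \<subseteq> T \<and> S \<noteq> {} \<longrightarrow> (\<exists>m\<in>S. \<forall>y\<in>S. m \<le> y))"

definition toppling_procedure :: "real set \<Rightarrow> (real \<Rightarrow> 'a \<Rightarrow> real) \<Rightarrow> bool" where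
  "toppling_procedure T u \<longleftrightarrow>
     T \<subseteq> {0..} \<and> closed T \<and> well_ordered_set T \<and> 0 \<in> T \<and>
     (\<forall>t\<in>T. \<forall>x. 0 \<le> u t x) \<and>
     (\<forall>x. u 0 x = 0) \<and>
     (\<forall>x. \<forall>t1\<in>T. \<forall>t2\<in>T. t1 \<le> t2 \<longrightarrow> u t1 x \<le> u t2 x) \<and>
     (\<forall>x tn t. (\<forall>n. tn n \<in> T) \<and> incseq tn \<and> t \<in> T \<and> tn \<longlonglongrightarrow> t
          \<longrightarrow> (\<lambda>n. u (tn n) x) \<longlonglongrightarrow> u t x)"

definition tminus :: "real set \<Rightarrow> real \<Rightarrow> real" where
  "tminus T t = Sup {r\<in>T. r < t}"

definition legal :: "('a \<Rightarrow> 'a \<Rightarrow> bool) \<Rightarrow> ('a \<Rightarrow> real) \<Rightarrow> real set \<Rightarrow> (real \<Rightarrow> 'a \<Rightarrow> real) \<Rightarrow> bool" where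
  "legal E s T u \<longleftrightarrow> toppling_procedure T u \<and>
     (\<forall>x. \<forall>t\<in>T - {0}.
        u t x - u (tminus T t) x \<le> max (s x + lap E (u (tminus T t)) x - 1) 0 / real (deg E x))"

text \<open>u_infinity = lim_{t -> sup T} u_t, which for a monotone family equals the supremum over T
  (extended-real valued, so it may be infinite).\<close>
definition u_inf :: "real set \<Rightarrow> (real \<Rightarrow> 'a \<Rightarrow> real) \<Rightarrow> 'a \<Rightarrow> ereal" where
  "u_inf T u x = (SUP t\<in>T. ereal (u t x))"

definition finite_tp :: "real set \<Rightarrow> (real \<Rightarrow> 'a \<Rightarrow> real) \<Rightarrow> bool" where
  "finite_tp T u \<longleftrightarrow> (\<forall>x. u_inf T u x < \<infinity>)"

definition stabilizing :: "('a \<Rightarrow> 'a \<Rightarrow> bool) \<Rightarrow> ('a \<Rightarrow> real) \<Rightarrow> real set \<Rightarrow> (real \<Rightarrow> 'a \<Rightarrow> real) \<Rightarrow> bool" where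
  "stabilizing E s T u \<longleftrightarrow> toppling_procedure T u \<and> finite_tp T u \<and>
     (\<forall>x. s x + lap E (\<lambda>y. real_of_ereal (u_inf T u y)) x \<le> 1)"

end

theory Submission
  imports Defs
begin

lemma wo_induct:
  assumes "well_ordered_set T"
    and step: "\<And>t. t \<in> T \<Longrightarrow> (\<And>r. r \<in> T \<Longrightarrow> r < t \<Longrightarrow> P r) \<Longrightarrow> P t"
    and "t \<in> T"
  shows "P t"
proof (rule ccontr)
  assume "\<not> P t"
  then have ne: "{t\<in>T. \<not> P t} \<noteq> {}" using assms(3) by blast
  have sub: "{t\<in>T. \<not> P t} \<subseteq> T" by blast
  obtain m where m: "m \<in> {t\<in>T. \<not> P t}" "\<forall>y\<in>{t\<in>T. \<not> P t}. m \<le> y"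
    using assms(1) ne sub unfolding well_ordered_set_def by blast
  have "P m"
  proof (rule step)
    show "m \<in> T" using m(1) by blast
    fix r assume "r \<in> T" "r < m"
    then show "P r" using m(2) by force
  qed
  with m show False by blast
qed

lemma step_le:
  fixes E :: "'a \<Rightarrow> 'a \<Rightarrow> bool"
  assumes f: "f \<in> Fs E s" and wf: "\<And>y. w y \<le> f y"
    and v: "v x - w x \<le> max (s x + lap E w x - 1) 0 / real (deg E x)"
  shows "v x \<le> f x"
proof -
  let ?N = "nbrs E x" let ?d = "real (deg E x)"
  have lapw: "lap E w x = (\<Sum>y\<in>?N. w y) - ?d * w x"
    unfolding lap_def deg_def by (simp add: sum_subtractf)
  have lapf: "lap E f x = (\<Sum>y\<in>?N. f y) - ?d * f x"
    unfolding lap_def deg_def by (simp add: sum_subtractf)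
  have fx: "s x + lap E f x \<le> 1" using f unfolding Fs_def by auto
  have sm: "(\<Sum>y\<in>?N. w y) \<le> (\<Sum>y\<in>?N. f y)" by (rule sum_mono) (rule wf)
  show ?thesis
  proof (cases "deg E x = 0")
    case True
    then show ?thesis using v wf[of x] by simp
  next
    case False
    then have dpos: "?d > 0" by simp
    show ?thesis
    proof (cases "s x + lap E w x - 1 \<le> 0")
      case True
      then show ?thesis using v wf[of x] by simp
    next
      case False
      then have "v x \<le> w x + (s x + lap E w x - 1) / ?d" using v by simp
      also have "\<dots> = (s x + (\<Sum>y\<in>?N. w y) - 1) / ?d"
        using dpos by (simp add: lapw field_simps)
      also have "\<dots> \<le> (s x + (\<Sum>y\<in>?N. f y) - 1) / ?d"
        using dpos sm by (simp add: divide_right_mono)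
      also have "\<dots> \<le> f x"
        using dpos fx lapf by (simp add: pos_divide_le_eq algebra_simps)
      finally show ?thesis .
    qed
  qed
qed

lemma limit_seq:
  fixes T :: "real set"
  assumes "0 \<in> T" "t > 0" "tminus T t = t"
  shows "\<exists>r. (\<forall>n. r n \<in> T \<and> r n < t) \<and> incseq r \<and> r \<longlonglongrightarrow> t"
proof -
  let ?S = "{r\<in>T. r < t}"
  have ne: "?S \<noteq> {}" using assms by auto
  have bdd: "bdd_above ?S" by (auto intro!: bdd_aboveI[of _ t])
  have "\<forall>n. \<exists>c. c \<in> ?S \<and> t - inverse (real (Suc n)) < c"
  proof
    fix n
    have "t - inverse (real (Suc n)) < Sup ?S"
      using assms(3) unfolding tminus_def by simp
    then show "\<exists>c. c \<in> ?S \<and> t - inverse (real (Suc n)) < c"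
      using less_cSup_iff[OF ne bdd] by blast
  qed
  then obtain c where c0: "\<forall>n. c n \<in> ?S \<and> t - inverse (real (Suc n)) < c n"
    by (rule choice[THEN exE]) blast
  then have c: "\<And>n. c n \<in> ?S" "\<And>n. t - inverse (real (Suc n)) < c n" by blast+
  define r where "r n = Max (c ` {..n})" for n
  have rin: "r n \<in> c ` {..n}" for n unfolding r_def by (intro Max_in) auto
  have r1: "r n \<in> T \<and> r n < t" for n using rin[of n] c(1) by auto
  have r2: "c n \<le> r n" for n unfolding r_def by (intro Max_ge) auto
  have inc: "incseq r"
    unfolding incseq_def r_def by (auto intro!: Max_mono)
  have lim1: "(\<lambda>n. t - inverse (real (Suc n))) \<longlonglongrightarrow> t"
    using tendsto_diff[OF tendsto_const LIMSEQ_inverse_real_of_nat, of t] by simp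
  have "r \<longlonglongrightarrow> t"
  proof (rule tendsto_sandwich[OF _ _ lim1 tendsto_const])
    show "\<forall>\<^sub>F n in sequentially. t - inverse (real (Suc n)) \<le> r n"
    proof (rule always_eventually, rule allI)
      fix n show "t - inverse (real (Suc n)) \<le> r n" using c(2)[of n] r2[of n] by linarith
    qed
    show "\<forall>\<^sub>F n in sequentially. r n \<le> t"
    proof (rule always_eventually, rule allI)
      fix n show "r n \<le> t" using r1[of n] by linarith
    qed
  qed
  then show ?thesis using r1 inc by blast
qed

lemma legal_le:
  fixes E :: "'a \<Rightarrow> 'a \<Rightarrow> bool"
  assumes L: "legal E s T u" and f: "f \<in> Fs E s"
  shows "\<forall>t\<in>T. \<forall>x. u t x \<le> f x"
proof -
  have tp: "toppling_procedure T u" using L unfolding legal_def by auto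
  have f0: "\<And>x. 0 \<le> f x" using f unfolding Fs_def by auto
  have T: "T \<subseteq> {0..}" "closed T" "well_ordered_set T" "0 \<in> T"
    using tp unfolding toppling_procedure_def by auto
  have u0: "\<And>x. u 0 x = 0" using tp unfolding toppling_procedure_def by auto
  have cont: "\<And>x tn t. (\<forall>n. tn n \<in> T) \<Longrightarrow> incseq tn \<Longrightarrow> t \<in> T \<Longrightarrow> tn \<longlonglongrightarrow> t
          \<Longrightarrow> (\<lambda>n. u (tn n) x) \<longlonglongrightarrow> u t x"
    using tp unfolding toppling_procedure_def by blast
  have leg: "\<And>x t. t \<in> T - {0} \<Longrightarrow>
        u t x - u (tminus T t) x \<le> max (s x + lap E (u (tminus T t)) x - 1) 0 / real (deg E x)"
    using L unfolding legal_def by blast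
  show ?thesis
  proof
    fix t assume "t \<in> T"
    show "\<forall>x. u t x \<le> f x"
    proof (rule wo_induct[OF T(3), where P="\<lambda>t. \<forall>x. u t x \<le> f x"])
      show "t \<in> T" by fact
    next
      fix t assume tT: "t \<in> T" and IH0: "\<And>r. r \<in> T \<Longrightarrow> r < t \<Longrightarrow> \<forall>x. u r x \<le> f x"
      show "\<forall>x. u t x \<le> f x"
      proof (cases "t = 0")
        case True then show ?thesis using u0 f0 by simp
      next
        case False
        then have tpos: "t > 0" using tT T(1) by force
        let ?S = "{r\<in>T. r < t}"
        have ne: "?S \<noteq> {}" using T(4) tpos by auto
        have bdd: "bdd_above ?S" by (auto intro!: bdd_aboveI[of _ t])
        have sub: "?S \<subseteq> T" by blast
        have mT: "tminus T t \<in> T"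
          unfolding tminus_def by (rule closed_subset_contains_Sup[OF T(2) sub ne bdd])
        have mle: "tminus T t \<le> t"
          unfolding tminus_def by (rule cSup_least[OF ne]) auto
        show ?thesis
        proof (cases "tminus T t < t")
          case True
          have IH: "\<forall>y. u (tminus T t) y \<le> f y" using IH0[OF mT True] .
          show ?thesis
          proof
            fix x
            show "u t x \<le> f x"
              by (rule step_le[OF f, of "u (tminus T t)"]) (use IH leg[of t x] tT False in auto)
          qed
        next
          case False
          then have eq: "tminus T t = t" using mle by simp
          obtain r where r: "\<And>n. r n \<in> T \<and> r n < t" "incseq r" "r \<longlonglongrightarrow> t"
            using limit_seq[OF T(4) tpos eq] by blast
          show ?thesis
          proof
            fix x
            have lim: "(\<lambda>n. u (r n) x) \<longlonglongrightarrow> u t x"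
              using cont[of r t x] r tT by blast
            show "u t x \<le> f x"
              by (rule LIMSEQ_le_const2[OF lim]) (use IH0 r(1) in blast)
          qed
        qed
      qed
    qed
  qed
qed

lemma legal_uinf_le:
  assumes "legal E s T u" "f \<in> Fs E s"
  shows "u_inf T u x \<le> ereal (f x)"
  using legal_le[OF assms] unfolding u_inf_def by (auto intro!: SUP_least)

lemma stab_facts:
  assumes S: "stabilizing E s T u"
  shows "(\<lambda>y. real_of_ereal (u_inf T u y)) \<in> Fs E s"
    and "u_inf T u x = ereal (real_of_ereal (u_inf T u x))"
proof -
  have tp: "toppling_procedure T u" and fin: "\<And>x. u_inf T u x < \<infinity>"
    and st: "\<And>x. s x + lap E (\<lambda>y. real_of_ereal (u_inf T u y)) x \<le> 1"
    using S unfolding stabilizing_def finite_tp_def by auto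
  have "0 \<in> T" "\<And>x. u 0 x = 0" using tp unfolding toppling_procedure_def by auto
  then have ge: "0 \<le> u_inf T u x" for x
    unfolding u_inf_def by (metis SUP_upper zero_ereal_def)
  have eq: "u_inf T u x = ereal (real_of_ereal (u_inf T u x))" for x
    using ge[of x] fin[of x] by (cases "u_inf T u x") auto
  show "u_inf T u x = ereal (real_of_ereal (u_inf T u x))" by (rule eq)
  have "0 \<le> real_of_ereal (u_inf T u x)" for x using ge[of x] by (simp add: real_of_ereal_pos)
  then show "(\<lambda>y. real_of_ereal (u_inf T u y)) \<in> Fs E s"
    unfolding Fs_def using st by auto
qed

lemma legal_stab_inf:
  assumes "legal E s T u" "stabilizing E s T u"
  shows "real_of_ereal (u_inf T u x) = Inf {f x | f. f \<in> Fs E s}"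
proof (rule cInf_eq_minimum[symmetric])
  show "real_of_ereal (u_inf T u x) \<in> {f x | f. f \<in> Fs E s}"
    using stab_facts(1)[OF assms(2)]
    by (intro CollectI exI[where x="\<lambda>y. real_of_ereal (u_inf T u y)"]) simp
  fix z assume "z \<in> {f x | f. f \<in> Fs E s}"
  then obtain f where "f \<in> Fs E s" "z = f x" by blast
  then have "u_inf T u x \<le> ereal z" using legal_uinf_le[OF assms(1)] by blast
  then show "real_of_ereal (u_inf T u x) \<le> z"
    using stab_facts(2)[OF assms(2), of x] by (metis ereal_less_eq(3))
qed

theorem proposition2p5:
  fixes E :: "'a \<Rightarrow> 'a \<Rightarrow> bool" and s :: "'a \<Rightarrow> real"
    and Tl :: "real set" and l :: "real \<Rightarrow> 'a \<Rightarrow> real"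
  assumes "conn_lf_graph E"
    and "legal E s Tl l"
  shows "(\<forall>f\<in>Fs E s. \<forall>x. u_inf Tl l x \<le> ereal (f x))
    \<and> (\<forall>T u. stabilizing E s T u \<longrightarrow> (\<forall>x. u_inf Tl l x \<le> u_inf T u x))
    \<and> (\<forall>T u. legal E s T u \<and> stabilizing E s T u \<longrightarrow>
          (\<forall>x. real_of_ereal (u_inf T u x) = Inf {f x | f. f \<in> Fs E s}))
    \<and> (\<forall>T u T' u'. legal E s T u \<and> stabilizing E s T u \<and> legal E s T' u' \<and> stabilizing E s T' u' \<longrightarrow>
          u_inf T u = u_inf T' u' \<and>
          (\<forall>x. s x + lap E (\<lambda>y. real_of_ereal (u_inf T u y)) x
             = s x + lap E (\<lambda>y. real_of_ereal (u_inf T' u' y)) x))"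
proof (intro conjI allI impI ballI)
  fix f x assume "f \<in> Fs E s"
  then show "u_inf Tl l x \<le> ereal (f x)" using legal_uinf_le[OF assms(2)] by blast
next
  fix T u x assume S: "stabilizing E s T u"
  show "u_inf Tl l x \<le> u_inf T u x"
    using legal_uinf_le[OF assms(2) stab_facts(1)[OF S], of x] stab_facts(2)[OF S, of x] by metis
next
  fix T u x assume "legal E s T u \<and> stabilizing E s T u"
  then show "real_of_ereal (u_inf T u x) = Inf {f x | f. f \<in> Fs E s}"
    using legal_stab_inf[of E s T u x] by blast
next
  fix T u T' u'
  assume A: "legal E s T u \<and> stabilizing E s T u \<and> legal E s T' u' \<and> stabilizing E s T' u'"
  have eq: "u_inf T u = u_inf T' u'"
  proof
    fix x
    have "u_inf T u x = ereal (real_of_ereal (u_inf T u x))" using A stab_facts(2)[of E s T u x] by blast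
    also have "\<dots> = ereal (real_of_ereal (u_inf T' u' x))"
      using A legal_stab_inf[of E s T u x] legal_stab_inf[of E s T' u' x] by simp
    also have "\<dots> = u_inf T' u' x" using A stab_facts(2)[of E s T' u' x] by simp
    finally show "u_inf T u x = u_inf T' u' x" .
  qed
  show "u_inf T u = u_inf T' u'" by (rule eq)
  fix x show "s x + lap E (\<lambda>y. real_of_ereal (u_inf T u y)) x
             = s x + lap E (\<lambda>y. real_of_ereal (u_inf T' u' y)) x" by (simp add: eq)
qed

end
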